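(* Let $G$ be the two-player game with $A_1=\{C_1,D_1\}$, $A_2=\{C_2,D_2\}$ and $\pi(C_1,C_2)=(2,2)$, $\pi(C_1,D_2)=(0,3)$, $\pi(D_1,C_2)=(3,0)$, $\pi(D_1,D_2)=(1,1)$. Then for every $p\in(0,1)$, the profile $(D_1,D_2)$ (the unique, and strict, Nash equilibrium of $G$) is not stable for the degree of observability $p$; that is, no stable configuration for degree $p$ has aggregate outcome equal to the point mass at $(D_1,D_2)$.
   Context: Preference types: $\Theta=\mathbb{R}^A$, $A=A_1\times A_2$ (extended bilinearly; $\pi_i$ likewise). $\mathcal{M}(\Theta^2)$: product distributions $\mu=\mu_1\times\mu_2$ with finitely supported marginals; $\mu(\theta)=\mu_1(\theta_1)\mu_2(\theta_2)$, $\mu_{-i}=\mu_j$ ($j\ne i$). Mutants: for nonempty $J\subseteq N=\{1,2\}$, $\tilde\theta_J\in\prod_{j\in J}(\Theta\setminus\operatorname{supp}\mu_j)$ with shares $\varepsilon\in(0,1)^{|J|}$, $\|\varepsilon\|=\max_j\varepsilon_j$; post-entry $\tilde\mu^\varepsilon_i=(1-\varepsilon_i)\mu_i+\varepsilon_i\delta_{\tilde\theta_i}$ for $i\in J$, $\mu_i$ otherwise. Partial observability with degree $p\in(0,1)$: each player independently observes opponents' types with probability $p$ and otherwise knows only $\mu_{-i}$. Strategies: $b:\operatorname{supp}\mu\to\prod_i\Delta(A_i)$ (play when observing) and $s_i:\operatorname{supp}\mu_i\to\Delta(A_i)$ (play when not observing), $s(\theta)=(s_i(\theta_i))_i$. For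 a matched profile $\theta$ and the set $T\subseteq N$ of non-observing players, the profile played is $(s(\theta)_T,b(\theta)_{-T})$. $(b,s)$ is an equilibrium if for all $\theta\in\operatorname{supp}\mu$ and $i$: $b_i(\theta)\in\arg\max_{\sigma_i}\sum_{T\subseteq N\setminus\{i\}}p^{n-1-|T|}(1-p)^{|T|}\theta_i(\sigma_i,(s_{-i}(\theta_{-i})_T,b_{-i}(\theta)_{-T}))$ and $s_i(\theta_i)\in\arg\max_{\sigma_i}\sum_{\theta'_{-i}}\mu_{-i}(\theta'_{-i})\sum_{T\subseteq N\setminus\{i\}}p^{n-1-|T|}(1-p)^{|T|}\theta_i(\sigma_i,(s_{-i}(\theta'_{-i})_T,b_{-i}(\theta_i,\theta'_{-i})_{-T}))$ (here $n=2$); $B_p(\mu)$ is the set of these; $(\mu,b,s)$ is a configuration. Aggregate outcome: $\varphi_{\mu,b,s}(a)=\sum_{\theta}\mu(\theta)\sum_{T\subseteq N}p^{n-|T|}(1-p)^{|T|}\prod_i(s(\theta)_T,b(\theta)_{-T})_i(a_i)$. Average fitness: $\Pi_{\theta_i}(\mu;b,s)=\sum_{\theta'_{-i}}\mu_{-i}(\theta'_{-i})\sum_{T\subseteq N}p^{n-|T|}(1-p)^{|T|}\pi_i(s(\theta_i,\theta'_{-i})_T,b(\theta_i,\theta'_{-i})_{-T})$. Balanced: equal average fitness of all types within each population. Nearby set: $B_p^\eta(\tilde\mu^\varepsilon;b,s)=\{(\tilde b,\tilde s)\in B_p(\tilde\mu^\varepsilon):\max_i\|\tilde b_i(\theta)-b_i(\theta)\|\le\eta,\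 \max_i\|\tilde s_i(\theta_i)-s_i(\theta_i)\|\le\eta\ \forall\theta\in\operatorname{supp}\mu\}$. $(\mu,b,s)$ is stable (for degree $p$) if balanced and for every nonempty $J$, every $\tilde\theta_J$, every $\eta>0$, there are $\bar\eta\in[0,\eta)$, $\bar\epsilon\in(0,1)$ such that for all $\varepsilon$ with $\|\varepsilon\|\in(0,\bar\epsilon)$, $B_p^{\bar\eta}(\tilde\mu^\varepsilon;b,s)\ne\emptyset$ and each of its elements satisfies (i) some $j\in J$ has $\Pi_{\theta_j}>\Pi_{\tilde\theta_j}$ (post-entry) for all $\theta_j\in\operatorname{supp}\mu_j$, or (ii) for every $i$ all types in $\operatorname{supp}\tilde\mu^\varepsilon_i$ have equal post-entry average fitness. A pure profile $a^*$ is stable for degree $p$ if the point mass at $a^*$ is the aggregate outcome of a stable configuration for $p$. *)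

theory Defs
  imports Complex_Main
begin

text \<open>Two-player games, both action sets being two-element sets {C, D}
  (C_i = C, D_i = D for player i). Players are the naturals 1 and 2.\<close>

datatype act = C | D

type_synonym ptype = "act \<times> act \<Rightarrow> real"
type_synonym mixed = "act \<Rightarrow> real"

definition acts :: "act set" where "acts = {C, D}"

definition players :: "nat set" where "players = {1, 2}"

definition other :: "nat \<Rightarrow> nat" where "other i = 3 - i"

definition is_mixed :: "mixed \<Rightarrow> bool" where
  "is_mixed \<sigma> \<longleftrightarrow> (\<forall>a. 0 \<le> \<sigma> a) \<and> (\<Sum>a\<in>acts. \<sigma> a) = 1"

definition ext :: "ptype \<Rightarrow> mixed \<times> mixed \<Rightarrow> real" where
  "ext \<theta> \<sigma> = (\<Sum>a1\<in>acts. \<Sum>a2\<in>acts. fst \<sigma> a1 * snd \<sigma> a2 * \<theta> (a1, a2))"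

definition pr :: "nat \<Rightarrow> 'a \<Rightarrow> 'a \<Rightarrow> 'a \<times> 'a" where
  "pr i x y = (if i = 1 then (x, y) else (y, x))"

definition comp :: "'a \<times> 'a \<Rightarrow> nat \<Rightarrow> 'a" where
  "comp x i = (if i = 1 then fst x else snd x)"

definition supp :: "('a \<Rightarrow> real) \<Rightarrow> 'a set" where
  "supp \<mu> = {x. \<mu> x \<noteq> 0}"

definition fdist :: "('a \<Rightarrow> real) \<Rightarrow> bool" where
  "fdist \<mu> \<longleftrightarrow> finite (supp \<mu>) \<and> (\<forall>x. 0 \<le> \<mu> x) \<and> sum \<mu> (supp \<mu>) = 1"

text \<open>A product distribution mu = mu_1 x mu_2 is represented by its marginals
  mu :: nat => ptype => real (mu 1, mu 2).\<close>
definition suppP :: "(nat \<Rightarrow> ptype \<Rightarrow> real) \<Rightarrow> (ptype \<times> ptype) set" where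
  "suppP \<mu> = supp (\<mu> 1) \<times> supp (\<mu> 2)"

text \<open>Strategies: b i theta (play of player i when observing, theta a matched type profile)
  and s i theta_i (play of player i when not observing).\<close>

definition Ub :: "real \<Rightarrow> (ptype \<times> ptype) \<Rightarrow> nat \<Rightarrow> mixed
    \<Rightarrow> (nat \<Rightarrow> ptype \<times> ptype \<Rightarrow> mixed) \<Rightarrow> (nat \<Rightarrow> ptype \<Rightarrow> mixed) \<Rightarrow> real" where
  "Ub p \<theta> i \<sigma> b s =
     p * ext (comp \<theta> i) (pr i \<sigma> (b (other i) \<theta>))
     + (1 - p) * ext (comp \<theta> i) (pr i \<sigma> (s (other i) (comp \<theta> (other i))))"

definition Us :: "real \<Rightarrow> (nat \<Rightarrow> ptype \<Rightarrow> real) \<Rightarrow> nat \<Rightarrow> ptype \<Rightarrow> mixed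
    \<Rightarrow> (nat \<Rightarrow> ptype \<times> ptype \<Rightarrow> mixed) \<Rightarrow> (nat \<Rightarrow> ptype \<Rightarrow> mixed) \<Rightarrow> real" where
  "Us p \<mu> i t \<sigma> b s =
     (\<Sum>u\<in>supp (\<mu> (other i)). \<mu> (other i) u *
        (p * ext t (pr i \<sigma> (b (other i) (pr i t u)))
         + (1 - p) * ext t (pr i \<sigma> (s (other i) u))))"

definition is_eq :: "real \<Rightarrow> (nat \<Rightarrow> ptype \<Rightarrow> real)
    \<Rightarrow> (nat \<Rightarrow> ptype \<times> ptype \<Rightarrow> mixed) \<Rightarrow> (nat \<Rightarrow> ptype \<Rightarrow> mixed) \<Rightarrow> bool" where
  "is_eq p \<mu> b s \<longleftrightarrow>
     (\<forall>\<theta>\<in>suppP \<mu>. \<forall>i\<in>players. is_mixed (b i \<theta>) \<and>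
        (\<forall>\<sigma>. is_mixed \<sigma> \<longrightarrow> Ub p \<theta> i \<sigma> b s \<le> Ub p \<theta> i (b i \<theta>) b s)) \<and>
     (\<forall>i\<in>players. \<forall>t\<in>supp (\<mu> i). is_mixed (s i t) \<and>
        (\<forall>\<sigma>. is_mixed \<sigma> \<longrightarrow> Us p \<mu> i t \<sigma> b s \<le> Us p \<mu> i t (s i t) b s))"

text \<open>Weight of the set T of non-observing players, and the profile played.\<close>
definition wt :: "real \<Rightarrow> nat set \<Rightarrow> real" where
  "wt p T = p ^ (2 - card T) * (1 - p) ^ card T"

definition played :: "(nat \<Rightarrow> ptype \<times> ptype \<Rightarrow> mixed) \<Rightarrow> (nat \<Rightarrow> ptype \<Rightarrow> mixed)
    \<Rightarrow> ptype \<times> ptype \<Rightarrow> nat set \<Rightarrow> mixed \<times> mixed" where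
  "played b s \<theta> T =
     (if 1 \<in> T then s 1 (fst \<theta>) else b 1 \<theta>, if 2 \<in> T then s 2 (snd \<theta>) else b 2 \<theta>)"

definition outcome :: "real \<Rightarrow> (nat \<Rightarrow> ptype \<Rightarrow> real)
    \<Rightarrow> (nat \<Rightarrow> ptype \<times> ptype \<Rightarrow> mixed) \<Rightarrow> (nat \<Rightarrow> ptype \<Rightarrow> mixed) \<Rightarrow> act \<times> act \<Rightarrow> real" where
  "outcome p \<mu> b s a =
     (\<Sum>\<theta>\<in>suppP \<mu>. \<mu> 1 (fst \<theta>) * \<mu> 2 (snd \<theta>) *
        (\<Sum>T\<in>Pow players. wt p T *
           (fst (played b s \<theta> T) (fst a) * snd (played b s \<theta> T) (snd a))))"

text \<open>Average fitness of type t in population i; pi i is the material payoff of player i.\<close>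
definition fitness :: "(nat \<Rightarrow> ptype) \<Rightarrow> real \<Rightarrow> (nat \<Rightarrow> ptype \<Rightarrow> real)
    \<Rightarrow> (nat \<Rightarrow> ptype \<times> ptype \<Rightarrow> mixed) \<Rightarrow> (nat \<Rightarrow> ptype \<Rightarrow> mixed) \<Rightarrow> nat \<Rightarrow> ptype \<Rightarrow> real" where
  "fitness \<pi> p \<mu> b s i t =
     (\<Sum>u\<in>supp (\<mu> (other i)). \<mu> (other i) u *
        (\<Sum>T\<in>Pow players. wt p T * ext (\<pi> i) (played b s (pr i t u) T)))"

definition balanced :: "(nat \<Rightarrow> ptype) \<Rightarrow> real \<Rightarrow> (nat \<Rightarrow> ptype \<Rightarrow> real)
    \<Rightarrow> (nat \<Rightarrow> ptype \<times> ptype \<Rightarrow> mixed) \<Rightarrow> (nat \<Rightarrow> ptype \<Rightarrow> mixed) \<Rightarrow> bool" where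
  "balanced \<pi> p \<mu> b s \<longleftrightarrow>
     (\<forall>i\<in>players. \<forall>t\<in>supp (\<mu> i). \<forall>t'\<in>supp (\<mu> i).
        fitness \<pi> p \<mu> b s i t = fitness \<pi> p \<mu> b s i t')"

definition postentry :: "(nat \<Rightarrow> ptype \<Rightarrow> real) \<Rightarrow> nat set \<Rightarrow> (nat \<Rightarrow> ptype)
    \<Rightarrow> (nat \<Rightarrow> real) \<Rightarrow> nat \<Rightarrow> ptype \<Rightarrow> real" where
  "postentry \<mu> J m eps i =
     (if i \<in> J then (\<lambda>x. (1 - eps i) * \<mu> i x + eps i * (if x = m i then 1 else 0)) else \<mu> i)"

definition mdist :: "mixed \<Rightarrow> mixed \<Rightarrow> real" where
  "mdist \<sigma> \<tau> = Max ((\<lambda>a. \<bar>\<sigma> a - \<tau> a\<bar>) ` acts)"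

text \<open>Membership in the nearby set B_p^eta(mu'; b, s), mu the pre-entry population.\<close>
definition nearby :: "real \<Rightarrow> (nat \<Rightarrow> ptype \<Rightarrow> real) \<Rightarrow> (nat \<Rightarrow> ptype \<Rightarrow> real)
    \<Rightarrow> (nat \<Rightarrow> ptype \<times> ptype \<Rightarrow> mixed) \<Rightarrow> (nat \<Rightarrow> ptype \<Rightarrow> mixed) \<Rightarrow> real
    \<Rightarrow> (nat \<Rightarrow> ptype \<times> ptype \<Rightarrow> mixed) \<Rightarrow> (nat \<Rightarrow> ptype \<Rightarrow> mixed) \<Rightarrow> bool" where
  "nearby p \<mu>' \<mu> b s \<eta> b' s' \<longleftrightarrow>
     is_eq p \<mu>' b' s' \<and>
     (\<forall>\<theta>\<in>suppP \<mu>. \<forall>i\<in>players.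
        mdist (b' i \<theta>) (b i \<theta>) \<le> \<eta> \<and> mdist (s' i (comp \<theta> i)) (s i (comp \<theta> i)) \<le> \<eta>)"

definition stable :: "(nat \<Rightarrow> ptype) \<Rightarrow> real \<Rightarrow> (nat \<Rightarrow> ptype \<Rightarrow> real)
    \<Rightarrow> (nat \<Rightarrow> ptype \<times> ptype \<Rightarrow> mixed) \<Rightarrow> (nat \<Rightarrow> ptype \<Rightarrow> mixed) \<Rightarrow> bool" where
  "stable \<pi> p \<mu> b s \<longleftrightarrow>
     balanced \<pi> p \<mu> b s \<and>
     (\<forall>J m \<eta>. J \<subseteq> players \<and> J \<noteq> {} \<and> (\<forall>j\<in>J. m j \<notin> supp (\<mu> j)) \<and> 0 < \<eta> \<longrightarrow>
        (\<exists>\<eta>b \<epsilon>b. 0 \<le> \<eta>b \<and> \<eta>b < \<eta> \<and> 0 < \<epsilon>b \<and> \<epsilon>b < 1 \<and>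
           (\<forall>eps. (\<forall>j\<in>J. 0 < eps j \<and> eps j < 1) \<and> 0 < Max (eps ` J) \<and> Max (eps ` J) < \<epsilon>b \<longrightarrow>
              (\<exists>b' s'. nearby p (postentry \<mu> J m eps) \<mu> b s \<eta>b b' s') \<and>
              (\<forall>b' s'. nearby p (postentry \<mu> J m eps) \<mu> b s \<eta>b b' s' \<longrightarrow>
                 (\<exists>j\<in>J. \<forall>t\<in>supp (\<mu> j).
                    fitness \<pi> p (postentry \<mu> J m eps) b' s' j t
                    > fitness \<pi> p (postentry \<mu> J m eps) b' s' j (m j)) \<or>
                 (\<forall>i\<in>players. \<forall>t\<in>supp (postentry \<mu> J m eps i).
                    \<forall>t'\<in>supp (postentry \<mu> J m eps i).
                    fitness \<pi> p (postentry \<mu> J m eps) b' s' i t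
                    = fitness \<pi> p (postentry \<mu> J m eps) b' s' i t')))))"

definition stable_profile :: "(nat \<Rightarrow> ptype) \<Rightarrow> real \<Rightarrow> act \<times> act \<Rightarrow> bool" where
  "stable_profile \<pi> p astar \<longleftrightarrow>
     (\<exists>\<mu> b s. fdist (\<mu> 1) \<and> fdist (\<mu> 2) \<and> is_eq p \<mu> b s \<and> stable \<pi> p \<mu> b s \<and>
        (\<forall>a. outcome p \<mu> b s a = (if a = astar then 1 else 0)))"

fun pd_pay :: "act \<times> act \<Rightarrow> real \<times> real" where
  "pd_pay (C, C) = (2, 2)"
| "pd_pay (C, D) = (0, 3)"
| "pd_pay (D, C) = (3, 0)"
| "pd_pay (D, D) = (1, 1)"

definition pd :: "nat \<Rightarrow> ptype" where
  "pd i = (\<lambda>a. if i = 1 then fst (pd_pay a) else snd (pd_pay a))"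

end

theory Submission imports Defs begin

definition dC :: mixed where "dC = (\<lambda>a. if a = C then 1 else 0)"
definition dD :: mixed where "dD = (\<lambda>a. if a = D then 1 else 0)"

lemma acts_sum[simp]: "(\<Sum>a\<in>acts. f a) = f C + f D"
  by (simp add: acts_def)

lemma ext_eq: "ext t (x,y) = x C * y C * t(C,C) + x C * y D * t(C,D) + x D * y C * t(D,C) + x D * y D * t(D,D)"
  by (simp add: ext_def algebra_simps)

lemma mixed_iff: "is_mixed \<sigma> \<longleftrightarrow> 0 \<le> \<sigma> C \<and> 0 \<le> \<sigma> D \<and> \<sigma> C + \<sigma> D = 1"
  unfolding is_mixed_def by (metis act.exhaust acts_sum)

lemma fun_act_eq: "f C = g C \<Longrightarrow> f D = g D \<Longrightarrow> f = (g::act\<Rightarrow>real)"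
  by (rule ext, case_tac x, auto)

lemma Pow_players: "Pow players = {{},{1},{2},{1,2}}"
  by (auto simp: players_def)

lemma sum_T: "(\<Sum>T\<in>Pow players. f T) = f {} + f {1} + f {2} + f {1,2}"
  by (simp add: Pow_players add.assoc)

lemma wt_vals: "wt p {} = p^2" "wt p {1} = p*(1-p)" "wt p {2} = p*(1-p)" "wt p {1,2} = (1-p)^2"
  by (simp_all add: wt_def power2_eq_square)

lemma played_vals: "played b s \<theta> {} = (b 1 \<theta>, b 2 \<theta>)"
  "played b s \<theta> {1} = (s 1 (fst \<theta>), b 2 \<theta>)"
  "played b s \<theta> {2} = (b 1 \<theta>, s 2 (snd \<theta>))"
  "played b s \<theta> {1,2} = (s 1 (fst \<theta>), s 2 (snd \<theta>))"
  by (simp_all add: played_def)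

lemma supp_pos: "fdist \<mu> \<Longrightarrow> x \<in> supp \<mu> \<Longrightarrow> 0 < \<mu> x"
  unfolding fdist_def supp_def by (metis less_eq_real_def mem_Collect_eq)

lemma supp_ne: "fdist \<mu> \<Longrightarrow> supp \<mu> \<noteq> {}"
  unfolding fdist_def by auto


lemma eq_mixed_b: "is_eq p \<mu> b s \<Longrightarrow> \<theta> \<in> suppP \<mu> \<Longrightarrow> i \<in> players \<Longrightarrow> is_mixed (b i \<theta>)"
  unfolding is_eq_def by blast
lemma eq_mixed_s: "is_eq p \<mu> b s \<Longrightarrow> t \<in> supp (\<mu> i) \<Longrightarrow> i \<in> players \<Longrightarrow> is_mixed (s i t)"
  unfolding is_eq_def by blast

lemma outcome_DD:
  assumes p: "0<p" "p<1" and f1: "fdist (\<mu> 1)" and f2: "fdist (\<mu> 2)" and eq: "is_eq p \<mu> b s"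
    and out: "\<forall>a. outcome p \<mu> b s a = (if a = (D,D) then 1 else 0)"
    and th: "\<theta> \<in> suppP \<mu>"
  shows "b 1 \<theta> = dD \<and> b 2 \<theta> = dD \<and> s 1 (fst \<theta>) = dD \<and> s 2 (snd \<theta>) = dD"
proof -
  have mx: "is_mixed (b 1 \<theta>')" "is_mixed (b 2 \<theta>')" "is_mixed (s 1 (fst \<theta>'))" "is_mixed (s 2 (snd \<theta>'))"
    if "\<theta>' \<in> suppP \<mu>" for \<theta>'
    using that eq_mixed_b[OF eq] eq_mixed_s[OF eq] by (auto simp: suppP_def players_def)
  define g where "g a \<theta>' = \<mu> 1 (fst \<theta>') * \<mu> 2 (snd \<theta>') *
        (\<Sum>T\<in>Pow players. wt p T * (fst (played b s \<theta>' T) (fst a) * snd (played b s \<theta>' T) (snd a)))" for a \<theta>'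
  have wtpos: "wt p T > 0" for T using p by (simp add: wt_def)
  have fin: "finite (suppP \<mu>)" using f1 f2 by (simp add: suppP_def fdist_def)
  have gnn: "0 \<le> g a \<theta>'" if "\<theta>' \<in> suppP \<mu>" for a \<theta>'
  proof -
    have "0 \<le> \<mu> 1 (fst \<theta>')" "0 \<le> \<mu> 2 (snd \<theta>')" using f1 f2 by (auto simp: fdist_def)
    moreover have "0 \<le> fst (played b s \<theta>' T) x" "0 \<le> snd (played b s \<theta>' T) x" for T x
      using mx[OF that] by (auto simp: played_def mixed_iff intro: act.exhaust[of x])
    ultimately show ?thesis unfolding g_def
      by (intro mult_nonneg_nonneg sum_nonneg) (auto intro: less_imp_le[OF wtpos])
  qed
  have prod0: "fst (played b s \<theta> T) (fst a) * snd (played b s \<theta> T) (snd a) = 0"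
    if "a \<noteq> (D,D)" "T \<subseteq> players" for a T
  proof -
    have "outcome p \<mu> b s a = 0" using out[rule_format, of a] that by argo
    hence "(\<Sum>\<theta>'\<in>suppP \<mu>. g a \<theta>') = 0" by (simp only: outcome_def g_def)
    hence "g a \<theta> = 0" using sum_nonneg_eq_0_iff[OF fin, of "g a"] gnn th by blast
    moreover have "\<mu> 1 (fst \<theta>) > 0" "\<mu> 2 (snd \<theta>) > 0"
      using th supp_pos[OF f1] supp_pos[OF f2] by (auto simp: suppP_def)
    ultimately have s0: "(\<Sum>T\<in>Pow players. wt p T * (fst (played b s \<theta> T) (fst a) * snd (played b s \<theta> T) (snd a))) = 0"
      by (simp add: g_def)
    have nn: "0 \<le> fst (played b s \<theta> T) x" "0 \<le> snd (played b s \<theta> T) x" for T x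
      using mx[OF th] by (auto simp: played_def mixed_iff intro: act.exhaust[of x])
    have "\<forall>T\<in>Pow players. wt p T * (fst (played b s \<theta> T) (fst a) * snd (played b s \<theta> T) (snd a)) = 0"
      using s0 sum_nonneg_eq_0_iff[of "Pow players"] nn wtpos
      by (smt (verit, ccfv_threshold) finite_Pow_iff finite_insert finite.emptyI players_def mult_nonneg_nonneg)
    thus ?thesis using that(2) wtpos[of T] by force
  qed
  have mt: "is_mixed (b 1 \<theta>)" "is_mixed (b 2 \<theta>)" "is_mixed (s 1 (fst \<theta>))" "is_mixed (s 2 (snd \<theta>))"
    using mx[OF th] by auto
  have e: "{} \<subseteq> players" "{1,2} \<subseteq> players" by (auto simp: players_def)
  have z1: "x C * y C = 0" "x C * y D = 0" "x D * y C = 0" if "(x,y) = played b s \<theta> T" "T \<subseteq> players" for x y T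
    using prod0[of "(C,C)" T] prod0[of "(C,D)" T] prod0[of "(D,C)" T] that by (metis act.distinct fst_conv prod.inject snd_conv)+
  have key: "x = dD \<and> y = dD" if "(x,y) = played b s \<theta> T" "T \<subseteq> players" "is_mixed x" "is_mixed y" for x y T
  proof -
    have a: "x C * y C = 0" "x C * y D = 0" "x D * y C = 0" using z1[OF that(1,2)] by auto
    have "x C = x C * (y C + y D)" using that(4) by (simp add: mixed_iff)
    hence xc: "x C = 0" using a by (simp add: distrib_left)
    have "y C = (x C + x D) * y C" using that(3) by (simp add: mixed_iff)
    hence yc: "y C = 0" using a by (simp add: distrib_right)
    show ?thesis using xc yc that(3,4) by (auto simp: mixed_iff dD_def intro!: fun_act_eq)
  qed
  show ?thesis using key[OF played_vals(1)[symmetric] e(1) mt(1,2)] key[OF played_vals(4)[symmetric] e(2) mt(3,4)] by blast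
qed


definition mk :: "real \<Rightarrow> ptype" where
  "mk K = (\<lambda>a. if a = (C,C) then K else if a = (D,D) then 1 else 0)"

lemma players_cases: "i \<in> players \<Longrightarrow> i = 1 \<or> i = 2" by (auto simp: players_def)

lemma ext_pr_dD: "i \<in> players \<Longrightarrow> ext t (pr i \<sigma> dD) = \<sigma> C * t (pr i C D) + \<sigma> D * t (pr i D D)"
  by (auto dest!: players_cases simp: pr_def ext_eq dD_def)
lemma ext_pr_dC: "i \<in> players \<Longrightarrow> ext t (pr i \<sigma> dC) = \<sigma> C * t (pr i C C) + \<sigma> D * t (pr i D C)"
  by (auto dest!: players_cases simp: pr_def ext_eq dC_def)

lemma dD_vals[simp]: "dD C = 0" "dD D = 1" by (simp_all add: dD_def)
lemma dC_vals[simp]: "dC C = 1" "dC D = 0" by (simp_all add: dC_def)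

lemma br_lemma: assumes "i \<in> players" "t (pr i C D) \<le> t (pr i D D)" "is_mixed \<sigma>"
  shows "ext t (pr i \<sigma> dD) \<le> ext t (pr i dD dD)"
proof -
  have "\<sigma> C * t (pr i C D) + \<sigma> D * t (pr i D D) \<le> \<sigma> C * t (pr i D D) + \<sigma> D * t (pr i D D)"
    using assms(2,3) by (simp add: mixed_iff mult_left_mono)
  also have "\<dots> = t (pr i D D)" using assms(3) by (simp add: mixed_iff flip: distrib_right)
  finally show ?thesis using ext_pr_dD[OF assms(1)] by simp
qed

lemma mk_pr[simp]: "mk K (pr i C C) = K" "mk K (pr i C D) = 0" "mk K (pr i D C) = 0" "mk K (pr i D D) = 1"
  by (simp_all add: mk_def pr_def)

lemma pr_eq_diag: "pr i t u = (x,x) \<longleftrightarrow> t = x \<and> u = x" by (auto simp: pr_def)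

lemma comp_pr: "i \<in> players \<Longrightarrow> comp (pr i x y) i = x" "i \<in> players \<Longrightarrow> comp (pr i x y) (other i) = y"
  by (auto dest!: players_cases simp: comp_def pr_def other_def)

lemma other_players: "i \<in> players \<Longrightarrow> other i \<in> players" "i \<in> players \<Longrightarrow> other i \<noteq> i"
  by (auto dest!: players_cases simp: other_def players_def)

lemma supp_post: assumes "fdist \<nu>" "x \<notin> supp \<nu>" "0<e" "e<1"
  shows "supp (\<lambda>y. (1-e)*\<nu> y + e*(if y = x then 1 else 0)) = insert x (supp \<nu>)"
proof -
  have "\<nu> x = 0" using assms(2) by (simp add: supp_def)
  moreover have "\<nu> y \<ge> 0" for y using assms(1) by (simp add: fdist_def)
  ultimately show ?thesis using assms(3,4) by (auto simp: supp_def)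
qed

lemma sum_post: assumes "fdist \<nu>" "x \<notin> supp \<nu>"
  shows "(\<Sum>u\<in>insert x (supp \<nu>). ((1-e)*\<nu> u + e*(if u = x then 1 else 0)) * f u) = e * f x + (1-e) * (\<Sum>u\<in>supp \<nu>. \<nu> u * f u)"
proof -
  have fin: "finite (supp \<nu>)" using assms(1) by (simp add: fdist_def)
  have nx: "\<nu> x = 0" using assms(2) by (simp add: supp_def)
  have "(\<Sum>u\<in>supp \<nu>. ((1-e)*\<nu> u + e*(if u = x then 1 else 0)) * f u) = (\<Sum>u\<in>supp \<nu>. (1-e) * (\<nu> u * f u))"
    using assms(2) by (intro sum.cong) auto
  thus ?thesis using fin assms(2) nx by (simp add: sum_distrib_left)
qed

lemma sum_const_fd: "fdist \<nu> \<Longrightarrow> (\<Sum>u\<in>supp \<nu>. \<nu> u * c) = c"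
  by (simp add: fdist_def flip: sum_distrib_right)


theorem mainTheorem19:
  fixes p :: real
  assumes "0 < p" and "p < 1"
  shows "\<not> stable_profile pd p (D, D)"
proof
  assume "stable_profile pd p (D,D)"
  then obtain \<mu> b s where f1: "fdist (\<mu> 1)" and f2: "fdist (\<mu> 2)" and eq: "is_eq p \<mu> b s"
    and st: "stable pd p \<mu> b s" and out: "\<forall>a. outcome p \<mu> b s a = (if a = (D,D) then 1 else 0)"
    unfolding stable_profile_def by blast
  have fd: "fdist (\<mu> i)" if "i \<in> players" for i using f1 f2 players_cases[OF that] by auto
  have resB: "b i \<theta> = dD" if "\<theta> \<in> suppP \<mu>" "i \<in> players" for \<theta> i
    using outcome_DD[OF assms f1 f2 eq out that(1)] players_cases[OF that(2)] by auto
  have prsupp: "pr i t u \<in> suppP \<mu>" if "t \<in> supp (\<mu> i)" "u \<in> supp (\<mu> (other i))" "i \<in> players" for i t u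
    using that players_cases[OF that(3)] by (auto simp: suppP_def pr_def other_def)
  have resS: "s i t = dD" if tt: "t \<in> supp (\<mu> i)" and ii: "i \<in> players" for t i
  proof -
    obtain u where u: "u \<in> supp (\<mu> (other i))" using supp_ne[OF fd[OF other_players(1)[OF ii]]] by blast
    from outcome_DD[OF assms f1 f2 eq out prsupp[OF tt u ii]] show ?thesis
      using players_cases[OF ii] by (auto simp: pr_def)
  qed
  have mixdC: "is_mixed dC" and mixdD: "is_mixed dD" by (simp_all add: mixed_iff)
  have cond: "t (pr i C D) \<le> t (pr i D D)" if tt: "t \<in> supp (\<mu> i)" and ii: "i \<in> players" for t i
  proof -
    obtain u where u: "u \<in> supp (\<mu> (other i))" using supp_ne[OF fd[OF other_players(1)[OF ii]]] by blast
    define \<theta> where "\<theta> = pr i t u"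
    have th: "\<theta> \<in> suppP \<mu>" using prsupp[OF tt u ii] by (simp add: \<theta>_def)
    have U: "Ub p \<theta> i \<sigma> b s = ext t (pr i \<sigma> dD)" for \<sigma>
      using resB[OF th other_players(1)[OF ii]] resS[OF u other_players(1)[OF ii]]
      by (simp add: Ub_def \<theta>_def comp_pr[OF ii] algebra_simps)
    have "Ub p \<theta> i dC b s \<le> Ub p \<theta> i (b i \<theta>) b s" using eq th ii mixdC unfolding is_eq_def by blast
    thus ?thesis using U resB[OF th ii] ext_pr_dD[OF ii] by simp
  qed
  define S where "S = supp (\<mu> 1) \<union> supp (\<mu> 2)"
  have finS: "finite S" using f1 f2 by (simp add: S_def fdist_def)
  define f where "f n = mk (1/p + real n)" for n :: nat
  have injf: "inj f"
  proof
    fix x y assume "f x = f y"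
    hence "f x (C,C) = f y (C,C)" by simp
    thus "x = y" by (simp add: f_def mk_def)
  qed
  have "finite (f -` S)" by (rule finite_vimageI[OF finS injf])
  then obtain n where n: "n \<notin> f -` S" using ex_new_if_finite[OF infinite_UNIV_nat] by blast
  define K where "K = 1/p + real n"
  have mkS: "mk K \<notin> supp (\<mu> i)" if "i \<in> players" for i
    using n players_cases[OF that] by (auto simp: S_def f_def K_def)
  have pK: "1 \<le> p*K" using assms by (simp add: K_def distrib_left)
  define m where "m = (\<lambda>i::nat. mk K)"
  have P: "players \<subseteq> players \<and> players \<noteq> {} \<and> (\<forall>j\<in>players. m j \<notin> supp (\<mu> j)) \<and> (0::real) < 1"
    using mkS by (simp add: m_def players_def)
  note S2 = st[unfolded stable_def, THEN conjunct2]
  from mp[OF spec[OF spec[OF spec[OF S2, of players], of m], of 1] P]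
  obtain \<eta>b \<epsilon>b where eb0: "0 \<le> \<eta>b" and "\<eta>b < 1" and "0 < \<epsilon>b" and "\<epsilon>b < 1" and
    stb: "\<forall>eps. (\<forall>j\<in>players. 0 < eps j \<and> eps j < 1) \<and> 0 < Max (eps ` players) \<and> Max (eps ` players) < \<epsilon>b \<longrightarrow>
              (\<exists>b' s'. nearby p (postentry \<mu> players m eps) \<mu> b s \<eta>b b' s') \<and>
              (\<forall>b' s'. nearby p (postentry \<mu> players m eps) \<mu> b s \<eta>b b' s' \<longrightarrow>
                 (\<exists>j\<in>players. \<forall>t\<in>supp (\<mu> j).
                    fitness pd p (postentry \<mu> players m eps) b' s' j t
                    > fitness pd p (postentry \<mu> players m eps) b' s' j (m j)) \<or>
                 (\<forall>i\<in>players. \<forall>t\<in>supp (postentry \<mu> players m eps i).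
                    \<forall>t'\<in>supp (postentry \<mu> players m eps i).
                    fitness pd p (postentry \<mu> players m eps) b' s' i t
                    = fitness pd p (postentry \<mu> players m eps) b' s' i t'))"
    by (elim exE conjE) (rule that; assumption)
  have eb: "0 \<le> \<eta>b" "0 < \<epsilon>b" "\<epsilon>b < 1" by fact+
  define e where "e = min (\<epsilon>b/2) (1/(2*(p*K+p)))"
  have pKp: "0 < p*K+p" using pK assms by linarith
  have e0: "0 < e" using eb pKp by (simp add: e_def)
  have e1: "e < 1" "e < \<epsilon>b" using eb e0 by (auto simp: e_def)
  have e2: "e*(p*K+p) \<le> 1/2"
  proof -
    have "e \<le> 1/(2*(p*K+p))" by (simp add: e_def)
    hence "e*(p*K+p) \<le> 1/(2*(p*K+p)) * (p*K+p)" using pKp by (intro mult_right_mono) auto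
    also have "1/(2*(p*K+p)) * (p*K+p) = 1/2" using pKp by (simp add: field_simps)
    finally show ?thesis .
  qed
  define eps where "eps = (\<lambda>_::nat. e)"
  have epsimg: "eps ` players = {e}" by (auto simp: eps_def players_def)
  have hyp: "(\<forall>j\<in>players. 0 < eps j \<and> eps j < 1) \<and> 0 < Max (eps ` players) \<and> Max (eps ` players) < \<epsilon>b"
    using e0 e1 by (simp add: epsimg) (simp add: eps_def)
  define \<mu>' where "\<mu>' = postentry \<mu> players m eps"
  have \<mu>'_eq: "\<mu>' i = (\<lambda>x. (1-e)*\<mu> i x + e*(if x = mk K then 1 else 0))" if "i \<in> players" for i
    using that by (simp add: \<mu>'_def postentry_def eps_def m_def)
  have supp': "supp (\<mu>' i) = insert (mk K) (supp (\<mu> i))" if "i \<in> players" for i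
    using supp_post[OF fd[OF that] mkS[OF that] e0 e1(1)] \<mu>'_eq[OF that] by simp
  have sum': "(\<Sum>u\<in>supp (\<mu>' i). \<mu>' i u * g u) = e * g (mk K) + (1-e) * (\<Sum>u\<in>supp (\<mu> i). \<mu> i u * g u)"
    if "i \<in> players" for i g
    using sum_post[OF fd[OF that] mkS[OF that], of e g] supp'[OF that] \<mu>'_eq[OF that] by simp
  define b' where "b' = (\<lambda>(i::nat) \<theta>. if \<theta> = (mk K, mk K) then dC else dD)"
  define s' where "s' = (\<lambda>(i::nat) (t::ptype). dD)"
  have condM: "mk K (pr i C D) \<le> mk K (pr i D D)" for i by simp
  have comp_in: "comp \<theta> i \<in> supp (\<mu>' i)" if "\<theta> \<in> suppP \<mu>'" "i \<in> players" for \<theta> i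
    using that players_cases[OF that(2)] by (auto simp: suppP_def comp_def)
  have eqB: "Ub p \<theta> i \<sigma> b' s' \<le> Ub p \<theta> i (b' i \<theta>) b' s'"
    if th: "\<theta> \<in> suppP \<mu>'" and i: "i \<in> players" and sig: "is_mixed \<sigma>" for \<theta> i \<sigma>
  proof (cases "\<theta> = (mk K, mk K)")
    case True
    have ct: "comp (mk K, mk K) i = mk K" by (simp add: comp_def)
    have U: "Ub p \<theta> i \<tau> b' s' = p * (\<tau> C * K) + (1-p) * \<tau> D" for \<tau>
      using True by (simp add: Ub_def ct b'_def s'_def ext_pr_dC[OF i] ext_pr_dD[OF i])
    have "(1-p) * \<sigma> D \<le> p*K * \<sigma> D" using pK assms sig by (intro mult_right_mono) (auto simp: mixed_iff)
    hence "p * (\<sigma> C * K) + (1-p) * \<sigma> D \<le> p * K * (\<sigma> C + \<sigma> D)" by (simp add: algebra_simps)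
    thus ?thesis using U True sig by (simp add: b'_def mixed_iff)
  next
    case False
    have U: "Ub p \<theta> i \<tau> b' s' = ext (comp \<theta> i) (pr i \<tau> dD)" for \<tau>
      using False by (simp add: Ub_def b'_def s'_def algebra_simps)
    have "comp \<theta> i (pr i C D) \<le> comp \<theta> i (pr i D D)"
      using comp_in[OF th i] supp'[OF i] cond[OF _ i] condM by auto
    from br_lemma[OF i this sig] show ?thesis using U False by (simp add: b'_def)
  qed
  have eqS: "Us p \<mu>' i t \<sigma> b' s' \<le> Us p \<mu>' i t (s' i t) b' s'"
    if t: "t \<in> supp (\<mu>' i)" and i: "i \<in> players" and sig: "is_mixed \<sigma>" for t i \<sigma>
  proof (cases "t = mk K")
    case True
    have o: "other i \<in> players" using other_players(1)[OF i] .
    have U: "Us p \<mu>' i t \<tau> b' s' = e * (p * (\<tau> C * K) + (1-p) * \<tau> D) + (1-e) * \<tau> D" for \<tau>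
    proof -
      have "Us p \<mu>' i t \<tau> b' s' = e * (p * ext t (pr i \<tau> dC) + (1-p) * ext t (pr i \<tau> dD))
           + (1-e) * (\<Sum>u\<in>supp (\<mu> (other i)). \<mu> (other i) u * (p * ext t (pr i \<tau> (b' (other i) (pr i t u))) + (1-p) * ext t (pr i \<tau> dD)))"
        unfolding Us_def sum'[OF o] using True by (simp add: b'_def s'_def pr_eq_diag)
      also have "(\<Sum>u\<in>supp (\<mu> (other i)). \<mu> (other i) u * (p * ext t (pr i \<tau> (b' (other i) (pr i t u))) + (1-p) * ext t (pr i \<tau> dD)))
          = (\<Sum>u\<in>supp (\<mu> (other i)). \<mu> (other i) u * \<tau> D)"
        using True mkS[OF o] by (intro sum.cong) (auto simp: b'_def pr_eq_diag ext_pr_dD[OF i] algebra_simps)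
      also have "\<dots> = \<tau> D" using sum_const_fd[OF fd[OF o]] .
      finally show ?thesis using True by (simp add: ext_pr_dC[OF i] ext_pr_dD[OF i])
    qed
    have "e * (p * (\<sigma> C * K) + (1-p) * \<sigma> D) + (1-e) * \<sigma> D = \<sigma> C * (e*(p*K+p) - 1) + (1 - e*p)"
    proof -
      have hs: "\<sigma> D = 1 - \<sigma> C" using sig by (simp add: mixed_iff)
      show ?thesis by (simp add: hs algebra_simps)
    qed
    also have "\<dots> \<le> 1 - e*p" using e2 sig by (simp add: mixed_iff mult_nonneg_nonpos)
    finally show ?thesis using U[of \<sigma>] U[of dD] by (simp add: s'_def algebra_simps)
  next
    case False
    have o: "other i \<in> players" using other_players(1)[OF i] .
    have U: "Us p \<mu>' i t \<tau> b' s' = ext t (pr i \<tau> dD)" for \<tau>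
    proof -
      have "Us p \<mu>' i t \<tau> b' s' = (\<Sum>u\<in>supp (\<mu>' (other i)). \<mu>' (other i) u * ext t (pr i \<tau> dD))"
        unfolding Us_def using False by (intro sum.cong) (auto simp: b'_def s'_def pr_eq_diag algebra_simps)
      also have "\<dots> = ext t (pr i \<tau> dD)" unfolding sum'[OF o] sum_const_fd[OF fd[OF o]] by (simp add: algebra_simps)
      finally show ?thesis .
    qed
    have "t \<in> supp (\<mu> i)" using t False supp'[OF i] by auto
    from br_lemma[OF i cond[OF this i] sig] show ?thesis using U by (simp add: s'_def)
  qed
  have eq': "is_eq p \<mu>' b' s'"
    unfolding is_eq_def using eqB eqS by (auto simp: b'_def s'_def mixdC mixdD)
  have md0: "mdist x x = 0" for x by (simp add: mdist_def acts_def)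
  have nb: "nearby p \<mu>' \<mu> b s \<eta>b b' s'"
    unfolding nearby_def
  proof (intro conjI eq' ballI)
    fix \<theta> i assume th: "\<theta> \<in> suppP \<mu>" and i: "i \<in> players"
    have "fst \<theta> \<in> supp (\<mu> 1)" using th by (auto simp: suppP_def)
    hence ne: "\<theta> \<noteq> (mk K, mk K)" using mkS[of 1] by (auto simp: players_def)
    have ci: "comp \<theta> i \<in> supp (\<mu> i)" using th players_cases[OF i] by (auto simp: suppP_def comp_def)
    show "mdist (b' i \<theta>) (b i \<theta>) \<le> \<eta>b" using ne resB[OF th i] eb0 md0 by (simp add: b'_def)
    show "mdist (s' i (comp \<theta> i)) (s i (comp \<theta> i)) \<le> \<eta>b" using resS[OF ci i] eb0 md0 by (simp add: s'_def)
  qed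
  define inner where "inner i \<theta> = (\<Sum>T\<in>Pow players. wt p T * ext (pd i) (played b' s' \<theta> T))" for i \<theta>
  have innerND: "inner i \<theta> = 1" if "\<theta> \<noteq> (mk K, mk K)" "i \<in> players" for i \<theta>
  proof -
    have "played b' s' \<theta> T = (dD, dD)" for T using that(1) by (simp add: played_def b'_def s'_def)
    moreover have "ext (pd i) (dD,dD) = 1" using players_cases[OF that(2)] by (auto simp: ext_eq pd_def)
    ultimately have "inner i \<theta> = (\<Sum>T\<in>Pow players. wt p T)" by (simp add: inner_def)
    also have "\<dots> = 1" unfolding sum_T wt_vals by (simp add: power2_eq_square algebra_simps)
    finally show ?thesis .
  qed
  have innerM: "inner i (mk K, mk K) = 1 + p" if "i \<in> players" for i
    using players_cases[OF that] unfolding inner_def sum_T wt_vals played_vals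
    by (auto simp: b'_def s'_def ext_eq pd_def power2_eq_square algebra_simps)
  have fit_eq: "fitness pd p \<mu>' b' s' i t = (\<Sum>u\<in>supp (\<mu>' (other i)). \<mu>' (other i) u * inner i (pr i t u))" for i t
    by (simp add: fitness_def inner_def)
  have fitT: "fitness pd p \<mu>' b' s' i t = 1" if "t \<in> supp (\<mu> i)" "i \<in> players" for i t
  proof -
    have tn: "t \<noteq> mk K" using that mkS by blast
    have o: "other i \<in> players" using other_players(1)[OF that(2)] .
    have "fitness pd p \<mu>' b' s' i t = (\<Sum>u\<in>supp (\<mu>' (other i)). \<mu>' (other i) u * 1)"
      unfolding fit_eq using tn innerND[OF _ that(2)] by (intro sum.cong) (auto simp: pr_eq_diag)
    also have "\<dots> = 1" unfolding sum'[OF o] sum_const_fd[OF fd[OF o]] by simp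
    finally show ?thesis .
  qed
  have fitM: "fitness pd p \<mu>' b' s' i (mk K) = 1 + e*p" if i: "i \<in> players" for i
  proof -
    have o: "other i \<in> players" using other_players(1)[OF i] .
    have "fitness pd p \<mu>' b' s' i (mk K) = e * inner i (pr i (mk K) (mk K)) + (1-e) * (\<Sum>u\<in>supp (\<mu> (other i)). \<mu> (other i) u * inner i (pr i (mk K) u))"
      unfolding fit_eq sum'[OF o] ..
    also have "(\<Sum>u\<in>supp (\<mu> (other i)). \<mu> (other i) u * inner i (pr i (mk K) u)) = (\<Sum>u\<in>supp (\<mu> (other i)). \<mu> (other i) u * 1)"
    proof (intro sum.cong refl)
      fix u assume "u \<in> supp (\<mu> (other i))"
      hence "u \<noteq> mk K" using mkS[OF o] by blast
      hence "pr i (mk K) u \<noteq> (mk K, mk K)" by (simp add: pr_eq_diag)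
      thus "\<mu> (other i) u * inner i (pr i (mk K) u) = \<mu> (other i) u * 1" using innerND[OF _ i] by simp
    qed
    also have "\<dots> = 1" using sum_const_fd[OF fd[OF o]] .
    also have "pr i (mk K) (mk K) = (mk K, mk K)" by (simp add: pr_def)
    finally show ?thesis using innerM[OF i] by (simp add: algebra_simps)
  qed
  have disj: "(\<exists>j\<in>players. \<forall>t\<in>supp (\<mu> j). fitness pd p \<mu>' b' s' j t > fitness pd p \<mu>' b' s' j (m j)) \<or>
        (\<forall>i\<in>players. \<forall>t\<in>supp (\<mu>' i). \<forall>t'\<in>supp (\<mu>' i). fitness pd p \<mu>' b' s' i t = fitness pd p \<mu>' b' s' i t')"
    using mp[OF spec[OF spec[OF conjunct2[OF mp[OF spec[OF stb, of eps] hyp]], of b'], of s'] nb[unfolded \<mu>'_def]]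
    unfolding \<mu>'_def .
  have ep: "0 < e*p" using e0 assms by simp
  show False
  proof (rule disjE[OF disj])
    assume "\<exists>j\<in>players. \<forall>t\<in>supp (\<mu> j). fitness pd p \<mu>' b' s' j t > fitness pd p \<mu>' b' s' j (m j)"
    then obtain j where j: "j \<in> players" and h: "\<forall>t\<in>supp (\<mu> j). fitness pd p \<mu>' b' s' j t > fitness pd p \<mu>' b' s' j (m j)" by blast
    obtain t where t: "t \<in> supp (\<mu> j)" using supp_ne[OF fd[OF j]] by blast
    show False using h t fitT[OF t j] fitM[OF j] ep by (auto simp: m_def)
  next
    assume h: "\<forall>i\<in>players. \<forall>t\<in>supp (\<mu>' i). \<forall>t'\<in>supp (\<mu>' i). fitness pd p \<mu>' b' s' i t = fitness pd p \<mu>' b' s' i t'"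
    have one: "(1::nat) \<in> players" by (simp add: players_def)
    obtain t where t: "t \<in> supp (\<mu> 1)" using supp_ne[OF f1] by blast
    have "t \<in> supp (\<mu>' 1)" "mk K \<in> supp (\<mu>' 1)" using supp'[OF one] t by auto
    hence "fitness pd p \<mu>' b' s' 1 t = fitness pd p \<mu>' b' s' 1 (mk K)" using h one by blast
    thus False using fitT[OF t one] fitM[OF one] ep by linarith
  qed
qed

end
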